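(* Let $H:\omega\to\omega$, let $\sigma\in{}^{<\omega}\omega$ with $|\sigma|=m$, let $n\in\omega$, and let $T\subseteq{}^{<\omega}H$ be a finite tree which is $H\restriction(m+2n)$-full-branching above $\sigma$. Let $C_1,C_2$ be a partition of the set of leaves of $T$. Then at least one of the following holds: (i) the tree consisting of the nodes of $T$ comparable with some element of $C_1$ is $H\restriction(m+n)$-full-branching above $\sigma$; (ii) there exists $\tau\succ\sigma$ with $|\tau|=m+n$ such that the tree consisting of the nodes of $T$ comparable with some element of $C_2$ is $H\restriction(m+2n)$-full-branching above $\tau$.
   Context: A tree is a set of finite strings closed under prefixes; a leaf is a node with no proper extension in the tree. ${}^{<\omega}H$ is the tree of strings $\rho$ with $\rho(i)<H(i)$ for all $i<|\rho|$. For $f:\omega\to\omega$, $f<H$ means $f(i)<H(i)$ for all $i$. For a string $\sigma$ and $N>|\sigma|$, a tree $T$ is $H\restriction N$-full-branching above $\sigma$ if for every $f<H$ with $\sigma\prec f$ we have $f\restriction N\in T$. *)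

theory Defs
  imports Main "HOL-Library.Sublist"
begin

text \<open>Finite strings of naturals are lists; \<open>\<sigma> \<preceq> \<tau>\<close> is \<open>prefix \<sigma> \<tau>\<close>.\<close>

definition is_tree :: "nat list set \<Rightarrow> bool" where
  "is_tree T \<longleftrightarrow> (\<forall>\<rho> \<in> T. \<forall>\<pi>. prefix \<pi> \<rho> \<longrightarrow> \<pi> \<in> T)"

definition bounded_strings :: "(nat \<Rightarrow> nat) \<Rightarrow> nat list set" where
  "bounded_strings H = {\<rho>. \<forall>i < length \<rho>. \<rho> ! i < H i}"

definition leaves :: "nat list set \<Rightarrow> nat list set" where
  "leaves T = {\<rho> \<in> T. \<not> (\<exists>\<tau> \<in> T. strict_prefix \<rho> \<tau>)}"

definition fun_below :: "(nat \<Rightarrow> nat) \<Rightarrow> (nat \<Rightarrow> nat) \<Rightarrow> bool" where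
  "fun_below f H \<longleftrightarrow> (\<forall>i. f i < H i)"

definition str_prefix_fun :: "nat list \<Rightarrow> (nat \<Rightarrow> nat) \<Rightarrow> bool" where
  "str_prefix_fun \<sigma> f \<longleftrightarrow> (\<forall>i < length \<sigma>. f i = \<sigma> ! i)"

definition restr :: "(nat \<Rightarrow> nat) \<Rightarrow> nat \<Rightarrow> nat list" where
  "restr f N = map f [0..<N]"

definition full_branching :: "(nat \<Rightarrow> nat) \<Rightarrow> nat \<Rightarrow> nat list set \<Rightarrow> nat list \<Rightarrow> bool" where
  "full_branching H N T \<sigma> \<longleftrightarrow>
     (\<forall>f. fun_below f H \<longrightarrow> str_prefix_fun \<sigma> f \<longrightarrow> restr f N \<in> T)"

definition comparable_subtree :: "nat list set \<Rightarrow> nat list set \<Rightarrow> nat list set" where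
  "comparable_subtree T C = {\<rho> \<in> T. \<exists>c \<in> C. prefix \<rho> c \<or> prefix c \<rho>}"

end

theory Submission
  imports Defs
begin

lemma restr_prefix: "a \<le> b \<Longrightarrow> prefix (restr f a) (restr f b)"
proof -
  assume "a \<le> b"
  then have "[0..<b] = [0..<a] @ [a..<b]"
    using upt_add_eq_append[of 0 a "b-a"] by simp
  then show ?thesis unfolding restr_def by (simp add: prefix_def) 
qed

lemma restr_eq_sp: "str_prefix_fun \<sigma> f \<Longrightarrow> restr f (length \<sigma>) = \<sigma>"
  unfolding restr_def str_prefix_fun_def by (intro nth_equalityI) auto

lemma restr_cong: "\<forall>i<N. g i = f i \<Longrightarrow> restr g N = restr f N"
  unfolding restr_def by simp

lemma exists_leaf:
  assumes "finite T" "\<rho> \<in> T"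
  shows "\<exists>l \<in> leaves T. prefix \<rho> l"
proof -
  let ?S = "{x\<in>T. prefix \<rho> x}"
  have fin: "finite (length ` ?S)" using assms(1) by simp
  have ne: "length ` ?S \<noteq> {}" using assms(2) by blast
  have "Max (length ` ?S) \<in> length ` ?S" using Max_in[OF fin ne] .
  then obtain l where l: "l \<in> ?S" "length l = Max (length ` ?S)" by auto
  have "\<forall>x\<in>?S. length x \<le> length l" using l(2) fin by auto
  moreover have "l \<in> leaves T"
  proof (rule ccontr)
    assume "l \<notin> leaves T"
    then obtain t where "t \<in> T" "strict_prefix l t" using l(1) unfolding leaves_def by auto
    then have "t \<in> ?S" "length l < length t" using l(1) prefix_order.trans
      by (auto simp: prefix_length_less strict_prefix_def)
    then show False using calculation by fastforce
  qed
  then show ?thesis using l(1) by blast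
qed

theorem mainTheorem9:
  fixes H :: "nat \<Rightarrow> nat" and \<sigma> :: "nat list" and m n :: nat
    and T C1 C2 :: "nat list set"
  assumes "length \<sigma> = m"
    and "is_tree T" and "finite T" and "T \<subseteq> bounded_strings H"
    and "full_branching H (m + 2 * n) T \<sigma>"
    and "C1 \<union> C2 = leaves T" and "C1 \<inter> C2 = {}"
  shows "full_branching H (m + n) (comparable_subtree T C1) \<sigma>
     \<or> (\<exists>\<tau>. prefix \<sigma> \<tau> \<and> length \<tau> = m + n \<and>
            full_branching H (m + 2 * n) (comparable_subtree T C2) \<tau>)"
proof (cases "full_branching H (m + n) (comparable_subtree T C1) \<sigma>")
  case True then show ?thesis by blast
next
  case False
  then obtain f where f: "fun_below f H" "str_prefix_fun \<sigma> f"
    "restr f (m+n) \<notin> comparable_subtree T C1"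
    unfolding full_branching_def by blast
  define \<tau> where "\<tau> = restr f (m+n)"
  have s: "\<sigma> = restr f m" using restr_eq_sp[OF f(2)] assms(1) by simp
  have p1: "prefix \<sigma> \<tau>" unfolding s \<tau>_def by (rule restr_prefix) simp
  have l\<tau>: "length \<tau> = m + n" unfolding \<tau>_def restr_def by simp
  have "full_branching H (m + 2 * n) (comparable_subtree T C2) \<tau>"
    unfolding full_branching_def
  proof (intro allI impI)
    fix g assume g: "fun_below g H" "str_prefix_fun \<tau> g"
    have gf: "\<forall>i<m+n. g i = f i" using g(2) l\<tau> unfolding \<tau>_def str_prefix_fun_def restr_def
      by auto
    have "str_prefix_fun \<sigma> g" using gf f(2) assms(1) unfolding str_prefix_fun_def by auto
    then have inT: "restr g (m + 2*n) \<in> T" using assms(5) g(1) unfolding full_branching_def by blast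
    obtain l where l: "l \<in> leaves T" "prefix (restr g (m + 2*n)) l"
      using exists_leaf[OF assms(3) inT] by blast
    have pt: "prefix \<tau> (restr g (m + 2*n))"
      using restr_prefix[of "m+n" "m+2*n" g] restr_cong[OF gf] unfolding \<tau>_def by simp
    have tT: "\<tau> \<in> T" using assms(2) inT pt unfolding is_tree_def by blast
    have "l \<notin> C1"
    proof
      assume "l \<in> C1"
      then have "\<tau> \<in> comparable_subtree T C1" unfolding comparable_subtree_def
        using tT pt l(2) prefix_order.trans by blast
      then show False using f(3) unfolding \<tau>_def by simp
    qed
    then have "l \<in> C2" using l(1) assms(6) by blast
    then show "restr g (m + 2*n) \<in> comparable_subtree T C2"
      unfolding comparable_subtree_def using inT l(2) by blast
  qed
  then show ?thesis
    using p1 l\<tau> by blast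
qed

end
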